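(* Correctness and invariance to $\alpha$-transformation on a triad are logically independent properties of weighting methods: there exists a weighting method (the Eigenvector Method) satisfying correctness but not invariance to $\alpha$-transformation on a triad, and there exists a weighting method (the flat method $f_i(\mathbf{A}) = 1/n$ for all $i$) satisfying invariance to $\alpha$-transformation on a triad but not correctness.
   Context: A pairwise comparison matrix of size $n$ is a matrix $\mathbf{A} = [a_{i,j}]$ with positive entries and $a_{j,i} = 1/a_{i,j}$ for all $i,j$; $\mathcal{A}^{n\times n}$ is the set of these; $\mathbf{A}$ is consistent if $a_{i,k} = a_{i,j}a_{j,k}$ for all $i,j,k$. A weighting method is a function $f$ from $\mathcal{A}^{n\times n}$ to vectors with positive entries summing to 1. Correctness: for every consistent $\mathbf{A}$, $f_i(\mathbf{A})/f_j(\mathbf{A}) = a_{i,j}$ for all $i,j$. An $\alpha$-transformation on the triad $(i,j,k)$ (three distinct indices), with $\alpha>0$, maps $\mathbf{A}$ to $\hat{\mathbf{A}}$ with $\hat a_{i,j} = \alpha a_{i,j}$, $\hat a_{j,i} = a_{j,i}/\alpha$, $\hat a_{j,k} = \alpha a_{j,k}$, $\hat a_{k,j} = a_{k,j}/\alpha$, $\hat a_{k,i} = \alpha a_{k,i}$, $\hat a_{i,k} = a_{i,k}/\alpha$, all other entries unchanged; invariance means $f(\mathbf{A}) = f(\hat{\mathbf{A}})$ whenever $\hat{\mathbf{A}}$ arises from $\mathbf{A}$ by such a transformation. The Eigenvector Method assigns to $\mathbf{A}$ the vector $\mathbf{w}$ with positive entries, $\sum_i w_i = 1$, and $\mathbf{A}\mathbf{w}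 = \lambda_{\max}\mathbf{w}$, where $\lambda_{\max}$ is the Perron eigenvalue of $\mathbf{A}$. *)

theory Defs
  imports "HOL-Analysis.Analysis"
begin

definition pcm :: "real^'n^'n \<Rightarrow> bool" where
  "pcm A \<longleftrightarrow> (\<forall>i j. A$i$j > 0) \<and> (\<forall>i j. A$j$i = 1 / A$i$j)"

definition consistent :: "real^'n^'n \<Rightarrow> bool" where
  "consistent A \<longleftrightarrow> (\<forall>i j k. A$i$k = A$i$j * A$j$k)"

definition weighting_method :: "(real^'n^'n \<Rightarrow> real^'n) \<Rightarrow> bool" where
  "weighting_method f \<longleftrightarrow>
     (\<forall>A. pcm A \<longrightarrow> (\<forall>i. f A $ i > 0) \<and> (\<Sum>i\<in>UNIV. f A $ i) = 1)"

definition correctness :: "(real^'n^'n \<Rightarrow> real^'n) \<Rightarrow> bool" where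
  "correctness f \<longleftrightarrow>
     (\<forall>A. pcm A \<and> consistent A \<longrightarrow> (\<forall>i j. f A $ i / f A $ j = A$i$j))"

definition alpha_transform :: "real \<Rightarrow> 'n \<Rightarrow> 'n \<Rightarrow> 'n \<Rightarrow> real^'n^'n \<Rightarrow> real^'n^'n" where
  "alpha_transform \<alpha> i j k A =
     (\<chi> p q. if (p, q) = (i, j) \<or> (p, q) = (j, k) \<or> (p, q) = (k, i) then \<alpha> * A$p$q
             else if (p, q) = (j, i) \<or> (p, q) = (k, j) \<or> (p, q) = (i, k) then A$p$q / \<alpha>
             else A$p$q)"

definition invariant_alpha_triad :: "(real^'n^'n \<Rightarrow> real^'n) \<Rightarrow> bool" where
  "invariant_alpha_triad f \<longleftrightarrow>
     (\<forall>A \<alpha> i j k. pcm A \<and> \<alpha> > 0 \<and> i \<noteq> j \<and> j \<noteq> k \<and> i \<noteq> k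
        \<longrightarrow> f A = f (alpha_transform \<alpha> i j k A))"

text \<open>Perron eigenvalue: the largest real eigenvalue (for positive matrices this is the
  spectral radius, by Perron's theorem).\<close>
definition perron_eigenvalue :: "real^'n^'n \<Rightarrow> real" where
  "perron_eigenvalue A = Sup {l. \<exists>v. v \<noteq> 0 \<and> A *v v = l *\<^sub>R v}"

definition eigenvector_method :: "real^'n^'n \<Rightarrow> real^'n" where
  "eigenvector_method A =
     (THE w. (\<forall>i. w $ i > 0) \<and> (\<Sum>i\<in>UNIV. w $ i) = 1 \<and> A *v w = perron_eigenvalue A *\<^sub>R w)"

definition flat_method :: "real^'n^'n \<Rightarrow> real^'n" where
  "flat_method A = (\<chi> i. 1 / real CARD('n))"

end

theory Submission
  imports Defs
begin

lemma mv_nth: "(A *v x) $ i = (\<Sum>j\<in>UNIV. A$i$j * x$j)"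
  by (simp add: matrix_vector_mult_def)

lemma perron_le:
  fixes A :: "real^'n^'n"
  assumes A: "\<forall>i j. A$i$j > 0" and w: "\<forall>i. w$i > 0" and Aw: "A *v w = r *\<^sub>R w"
    and v: "v \<noteq> 0" and Av: "A *v v = l *\<^sub>R v"
  shows "l \<le> r"
proof -
  define t where "t = Max ((\<lambda>i. \<bar>v$i\<bar> / w$i) ` UNIV)"
  obtain i0 where i0: "t = \<bar>v$i0\<bar> / w$i0"
    using Max_in[of "(\<lambda>i. \<bar>v$i\<bar> / w$i) ` UNIV"] t_def by fastforce
  have tge: "\<bar>v$j\<bar> / w$j \<le> t" for j unfolding t_def by (rule Max_ge) auto
  have tj: "\<bar>v$j\<bar> \<le> t * w$j" for j using tge[of j] w by (simp add: pos_divide_le_eq)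
  obtain j where j: "v$j \<noteq> 0" using v by (metis vec_eq_iff zero_index)
  have tpos: "t > 0" using tge[of j] j w by (smt (verit) divide_pos_pos zero_less_abs_iff)
  have vi0: "\<bar>v$i0\<bar> = t * w$i0" using i0 w[rule_format, of i0] by (simp add: field_simps)
  have "\<bar>l\<bar> * \<bar>v$i0\<bar> = \<bar>(A *v v)$i0\<bar>" using Av by (simp add: abs_mult)
  also have "\<dots> = \<bar>\<Sum>j\<in>UNIV. A$i0$j * v$j\<bar>" by (simp add: mv_nth)
  also have "\<dots> \<le> (\<Sum>j\<in>UNIV. A$i0$j * \<bar>v$j\<bar>)"
    by (rule order_trans[OF sum_abs]) (use A in \<open>simp add: abs_mult less_imp_le\<close>)
  also have "\<dots> \<le> (\<Sum>j\<in>UNIV. A$i0$j * (t * w$j))"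
    by (rule sum_mono) (use A tj in \<open>simp add: mult_left_mono less_imp_le\<close>)
  also have "\<dots> = t * (A *v w)$i0" by (simp add: mv_nth sum_distrib_left algebra_simps)
  also have "\<dots> = r * (t * w$i0)" using Aw by simp
  finally have "\<bar>l\<bar> * (t * w$i0) \<le> r * (t * w$i0)" using vi0 by simp
  moreover have "t * w$i0 > 0" using tpos w by simp
  ultimately have "\<bar>l\<bar> \<le> r" by (rule mult_right_le_imp_le)
  then show ?thesis by simp
qed

lemma perron_uniq:
  fixes A :: "real^'n^'n"
  assumes A: "\<forall>i j. A$i$j > 0" and w: "\<forall>i. w$i > 0" and Aw: "A *v w = r *\<^sub>R w"
    and w': "\<forall>i. w'$i > 0" and Aw': "A *v w' = r *\<^sub>R w'"
    and s: "(\<Sum>i\<in>UNIV. w$i) = 1" and s': "(\<Sum>i\<in>UNIV. w'$i) = 1"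
  shows "w' = w"
proof -
  define t where "t = Min ((\<lambda>i. w'$i / w$i) ` UNIV)"
  obtain i0 where i0: "t = w'$i0 / w$i0"
    using Min_in[of "(\<lambda>i. w'$i / w$i) ` UNIV"] t_def by fastforce
  have tle: "t \<le> w'$j / w$j" for j unfolding t_def by (rule Min_le) auto
  define z where "z = w' - t *\<^sub>R w"
  have zj: "z$j \<ge> 0" for j using tle[of j] w by (simp add: z_def pos_le_divide_eq)
  have z0: "z$i0 = 0" using i0 w[rule_format, of i0] by (simp add: z_def field_simps)
  have Az: "A *v z = r *\<^sub>R z"
    by (simp add: z_def Aw Aw' matrix_vector_mult_diff_distrib matrix_vector_mult_scaleR algebra_simps)
  have "(A *v z)$i0 = r * z$i0" using Az by simp
  then have "(A *v z)$i0 = 0" using z0 by simp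
  then have S0: "(\<Sum>j\<in>UNIV. A$i0$j * z$j) = 0" by (simp only: mv_nth)
  have nn: "0 \<le> A$i0$j * z$j" if "j \<in> UNIV" for j
  proof -
    have "0 < A$i0$j" using A by blast
    then show ?thesis using zj[of j] by simp
  qed
  have all0: "\<forall>j\<in>UNIV. A$i0$j * z$j = 0"
    by (rule iffD1[OF sum_nonneg_eq_0_iff[OF finite_class.finite_UNIV nn] S0])
  have "z$j = 0" for j
  proof -
    have "0 < A$i0$j" using A by blast
    then show ?thesis using all0 by (metis UNIV_I mult_eq_0_iff less_irrefl)
  qed
  then have ww: "w' = t *\<^sub>R w" by (simp add: z_def vec_eq_iff)
  have "1 = t * 1" using s s' by (simp add: ww sum_distrib_left[symmetric])
  then show ?thesis using ww by simp
qed

lemma evm_char: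
  fixes A :: "real^'n^'n"
  assumes A: "\<forall>i j. A$i$j > 0" and w: "\<forall>i. w$i > 0" and Aw: "A *v w = r *\<^sub>R w"
    and s: "(\<Sum>i\<in>UNIV. w$i) = 1"
  shows "perron_eigenvalue A = r" "eigenvector_method A = w"
proof -
  have w0: "w \<noteq> 0" using w by (metis less_irrefl zero_index)
  show pr: "perron_eigenvalue A = r" unfolding perron_eigenvalue_def
  proof (rule cSup_eq_maximum)
    show "r \<in> {l. \<exists>v. v \<noteq> 0 \<and> A *v v = l *\<^sub>R v}" using w0 Aw by blast
    show "x \<le> r" if "x \<in> {l. \<exists>v. v \<noteq> 0 \<and> A *v v = l *\<^sub>R v}" for x
      using that perron_le[OF A w Aw] by blast
  qed
  show "eigenvector_method A = w" unfolding eigenvector_method_def pr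
  proof (rule the_equality)
    show "(\<forall>i. w $ i > 0) \<and> (\<Sum>i\<in>UNIV. w $ i) = 1 \<and> A *v w = r *\<^sub>R w"
      using w Aw s by blast
    show "w' = w" if "(\<forall>i. w' $ i > 0) \<and> (\<Sum>i\<in>UNIV. w' $ i) = 1 \<and> A *v w' = r *\<^sub>R w'" for w'
      using that perron_uniq[OF A w Aw _ _ s] by blast
  qed
qed

lemma perron_exists:
  fixes A :: "real^'n^'n"
  assumes A: "\<forall>i j. A$i$j > 0"
  shows "\<exists>w r. (\<forall>i. w$i > 0) \<and> (\<Sum>i\<in>UNIV. w$i) = 1 \<and> A *v w = r *\<^sub>R w"
proof -
  define S where "S = {x::real^'n. (\<forall>i. 0 \<le> x$i) \<and> (\<Sum>i\<in>UNIV. x$i) = 1}"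
  define g where "g x = (\<Sum>i\<in>UNIV. (A *v x)$i)" for x
  define f where "f x = (1 / g x) *\<^sub>R (A *v x)" for x
  have Apos: "(A *v x)$i > 0" if x: "x \<in> S" for x i
  proof -
    have "\<exists>j. x$j > 0"
    proof (rule ccontr)
      assume "\<not> (\<exists>j. x$j > 0)"
      then have "\<forall>j. x$j \<le> 0" by (simp add: not_less)
      then have "(\<Sum>i\<in>UNIV. x$i) \<le> 0" by (simp add: sum_nonpos)
      then show False using x by (simp add: S_def)
    qed
    then obtain j where j: "x$j > 0" by blast
    have "A$i$j * x$j > 0" using A j by simp
    also have "A$i$j * x$j \<le> (\<Sum>k\<in>UNIV. A$i$k * x$k)"
      by (rule member_le_sum) (use A x in \<open>auto simp: S_def intro: mult_nonneg_nonneg less_imp_le\<close>)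
    finally show ?thesis by (simp add: mv_nth)
  qed
  have gpos: "g x > 0" if "x \<in> S" for x
    unfolding g_def by (rule sum_pos) (use Apos that in auto)
  have cl: "closed S" unfolding S_def
    by (intro closed_Collect_conj closed_Collect_all closed_Collect_le closed_Collect_eq
        continuous_on_const continuous_on_component continuous_on_id continuous_on_sum)
  have bd: "bounded S" unfolding bounded_iff
  proof (intro exI ballI)
    fix x assume x: "x \<in> S"
    have "norm x \<le> (\<Sum>i\<in>UNIV. \<bar>x$i\<bar>)" by (rule norm_le_l1_cart)
    also have "\<dots> = 1" using x by (simp add: S_def)
    finally show "norm x \<le> 1" .
  qed
  have cv: "convex S" unfolding convex_def S_def
    by (auto simp: sum.distrib sum_distrib_left[symmetric])
  have ne: "S \<noteq> {}"
  proof -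
    have "(\<chi> i. 1 / real CARD('n)) \<in> S" by (simp add: S_def)
    then show ?thesis by blast
  qed
  have ct: "continuous_on S f" unfolding f_def g_def
    apply (intro continuous_intros)
    using gpos unfolding g_def by fastforce
  have im: "f ` S \<subseteq> S"
  proof
    fix y assume "y \<in> f ` S"
    then obtain x where x: "x \<in> S" and y: "y = f x" by blast
    have "\<forall>i. 0 \<le> y$i" using Apos[OF x] gpos[OF x] by (simp add: y f_def less_imp_le)
    moreover have "(\<Sum>i\<in>UNIV. y$i) = 1" using gpos[OF x]
      by (simp add: y f_def g_def sum_divide_distrib[symmetric])
    ultimately show "y \<in> S" by (simp add: S_def)
  qed
  obtain x where x: "x \<in> S" and fx: "f x = x"
    using brouwer[OF compact_eq_bounded_closed[THEN iffD2, OF conjI[OF bd cl]] cv ne ct image_subset_iff_funcset[THEN iffD1, OF im]] by blast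
  have Ax: "A *v x = g x *\<^sub>R x"
  proof -
    have "g x *\<^sub>R x = g x *\<^sub>R f x" using fx by simp
    also have "\<dots> = A *v x" using gpos[OF x] by (simp add: f_def)
    finally show ?thesis by simp
  qed
  have "x$i > 0" for i
  proof -
    have "x$i = f x $ i" using fx by simp
    also have "\<dots> = (A *v x)$i / g x" by (simp add: f_def)
    finally have "x$i = (A *v x)$i / g x" .
    then show ?thesis using Apos[OF x] gpos[OF x] by simp
  qed
  then show ?thesis using x Ax by (auto simp: S_def)
qed


lemma ex_notin: "card (F::'a::finite set) < CARD('a) \<Longrightarrow> \<exists>x. x \<notin> F"
  by (metis UNIV_eq_I less_irrefl)

lemma pcm_pos: "pcm A \<Longrightarrow> \<forall>i j. A$i$j > 0" unfolding pcm_def by blast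

lemma evm_weighting: "weighting_method (eigenvector_method :: real^'n^'n \<Rightarrow> real^'n)"
  unfolding weighting_method_def
proof (intro allI impI)
  fix A :: "real^'n^'n" assume "pcm A"
  then have A: "\<forall>i j. A$i$j > 0" by (rule pcm_pos)
  obtain w r where w: "\<forall>i. w$i > 0" "(\<Sum>i\<in>UNIV. w$i) = 1" "A *v w = r *\<^sub>R w"
    using perron_exists[OF A] by blast
  have "eigenvector_method A = w" using evm_char(2)[OF A w(1) w(3) w(2)] .
  then show "(\<forall>i. eigenvector_method A $ i > 0) \<and> (\<Sum>i\<in>UNIV. eigenvector_method A $ i) = 1"
    using w by simp
qed

lemma evm_correct: "correctness (eigenvector_method :: real^'n^'n \<Rightarrow> real^'n)"
  unfolding correctness_def
proof (intro allI impI)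
  fix A :: "real^'n^'n" and i j assume h: "pcm A \<and> consistent A"
  then have A: "\<forall>i j. A$i$j > 0" using pcm_pos by blast
  have cons: "\<And>a b c. A$a$c = A$a$b * A$b$c" using h unfolding consistent_def by blast
  define k0 :: 'n where "k0 = undefined"
  define S where "S = (\<Sum>q\<in>UNIV. A$q$k0)"
  have Spos: "S > 0" unfolding S_def by (rule sum_pos) (use A in auto)
  define w where "w = (\<chi> p. A$p$k0 / S)"
  have wpos: "\<forall>p. w$p > 0" using A Spos by (simp add: w_def)
  have ws: "(\<Sum>p\<in>UNIV. w$p) = 1" using Spos by (simp add: w_def S_def sum_divide_distrib[symmetric])
  have Aw: "A *v w = real CARD('n) *\<^sub>R w"
  proof (rule vec_eq_iff[THEN iffD2], rule allI)
    fix p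
    have "(A *v w)$p = (\<Sum>q\<in>UNIV. A$p$q * (A$q$k0 / S))" by (simp add: mv_nth w_def)
    also have "\<dots> = (\<Sum>q::'n\<in>UNIV. A$p$k0 / S)"
    proof -
      have pt: "A$p$q * (A$q$k0 / S) = A$p$k0 / S" for q using cons[where a=p and b=q and c=k0] by simp
      show ?thesis by (simp only: pt)
    qed
    also have "\<dots> = (real CARD('n) *\<^sub>R w)$p" by (simp add: w_def)
    finally show "(A *v w)$p = (real CARD('n) *\<^sub>R w)$p" .
  qed
  have e: "eigenvector_method A = w" using evm_char(2)[OF A wpos Aw ws] .
  have "w$i / w$j = A$i$k0 / A$j$k0" using Spos by (simp add: w_def)
  also have "\<dots> = A$i$j" using A cons[where a=i and b=j and c=k0] by (metis less_irrefl nonzero_mult_div_cancel_right)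
  finally show "eigenvector_method A $ i / eigenvector_method A $ j = A$i$j" using e by simp
qed

lemma evm_not_inv:
  assumes "CARD('n::finite) \<ge> 4"
  shows "\<not> invariant_alpha_triad (eigenvector_method :: real^'n^'n \<Rightarrow> real^'n)"
proof
  assume inv: "invariant_alpha_triad (eigenvector_method :: real^'n^'n \<Rightarrow> real^'n)"
  define i :: 'n where "i = undefined"
  obtain j :: 'n where j: "j \<notin> {i}" using ex_notin[of "{i}"] assms by auto
  have c2: "card {i, j} \<le> 2" by (auto simp: card_insert_if)
  obtain k :: 'n where k: "k \<notin> {i, j}" using ex_notin[of "{i, j}"] assms c2 by auto
  have c3: "card {i, j, k} \<le> 3" by (auto simp: card_insert_if)
  obtain l :: 'n where l: "l \<notin> {i, j, k}" using ex_notin[of "{i, j, k}"] assms c3 by auto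
  define n where "n = real CARD('n)"
  have npos: "n > 0" unfolding n_def by simp
  define A :: "real^'n^'n" where "A = (\<chi> p q. 1)"
  have pA: "pcm A" by (simp add: pcm_def A_def)
  have Apos: "\<forall>p q. A$p$q > 0" by (simp add: A_def)
  define w :: "real^'n" where "w = (\<chi> p. 1 / n)"
  have wpos: "\<forall>p. w$p > 0" using npos by (simp add: w_def)
  have ws: "(\<Sum>p\<in>UNIV. w$p) = 1" using npos by (simp add: w_def n_def)
  have Aw: "A *v w = n *\<^sub>R w"
    using npos by (simp add: vec_eq_iff mv_nth A_def w_def n_def)
  have eA: "eigenvector_method A = w" using evm_char(2)[OF Apos wpos Aw ws] .
  define B where "B = alpha_transform 2 i j k A"
  have Bpos: "\<forall>p q. B$p$q > 0" by (simp add: B_def alpha_transform_def A_def)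
  obtain w' r where w': "\<forall>p. w'$p > 0" "(\<Sum>p\<in>UNIV. w'$p) = 1" "B *v w' = r *\<^sub>R w'"
    using perron_exists[OF Bpos] by blast
  have eB: "eigenvector_method B = w'" using evm_char(2)[OF Bpos w'(1) w'(3) w'(2)] .
  have "eigenvector_method A = eigenvector_method B"
    using inv pA j k unfolding invariant_alpha_triad_def B_def by auto
  then have ww: "w' = w" using eA eB by simp
  have Bl: "B$l$q = 1" for q using l by (simp add: B_def alpha_transform_def A_def)
  have Bi: "B$i$q = 1 + (if q = j then 1 else 0) - (if q = k then 1/2 else 0)" for q
    using j k by (auto simp: B_def alpha_transform_def A_def)
  have "(B *v w)$l = 1" using npos by (simp add: mv_nth Bl w_def n_def)
  moreover have "(B *v w)$i = (\<Sum>q\<in>UNIV. (1 + (if q = j then 1 else 0) - (if q = k then 1/2 else 0)) * (1/n))"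
    by (simp add: mv_nth Bi w_def)
  moreover have "\<dots> = (n + 1/2) / n"
  proof -
    have "(\<Sum>q\<in>UNIV. (1 + (if q = j then 1 else 0) - (if q = k then 1/2 else 0)) * (1/n))
        = (\<Sum>q\<in>UNIV. (1 + (if q = j then 1 else 0) - (if q = k then 1/2 else 0))) * (1/n)"
      by (rule sum_distrib_right[symmetric])
    also have "(\<Sum>q\<in>UNIV. (1 + (if q = j then 1 else 0) - (if q = k then 1/2 else (0::real))))
        = n + 1 - 1/2"
      by (simp add: sum.distrib sum_subtractf n_def sum.delta sum.delta')
    finally show ?thesis by simp
  qed
  moreover have "(B *v w)$l = r * (1/n)" "(B *v w)$i = r * (1/n)"
    using w'(3) ww by (simp_all add: w_def)
  ultimately have "(n + 1/2) / n = 1" by simp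
  then show False using npos by (simp add: field_simps)
qed

lemma flat_props:
  assumes "CARD('n::finite) \<ge> 4"
  shows "weighting_method (flat_method :: real^'n^'n \<Rightarrow> real^'n)
           \<and> invariant_alpha_triad (flat_method :: real^'n^'n \<Rightarrow> real^'n)
           \<and> \<not> correctness (flat_method :: real^'n^'n \<Rightarrow> real^'n)"
proof (intro conjI)
  show "weighting_method (flat_method :: real^'n^'n \<Rightarrow> real^'n)"
    by (simp add: weighting_method_def flat_method_def)
  show "invariant_alpha_triad (flat_method :: real^'n^'n \<Rightarrow> real^'n)"
    by (simp add: invariant_alpha_triad_def flat_method_def)
  show "\<not> correctness (flat_method :: real^'n^'n \<Rightarrow> real^'n)"
  proof
    assume c: "correctness (flat_method :: real^'n^'n \<Rightarrow> real^'n)"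
    define i :: 'n where "i = undefined"
    obtain j :: 'n where j: "j \<notin> {i}" using ex_notin[of "{i}"] assms by auto
    define c :: "'n \<Rightarrow> real" where "c p = (if p = i then 2 else 1)" for p
    have cpos: "c p > 0" for p by (simp add: c_def)
    define A :: "real^'n^'n" where "A = (\<chi> p q. c p / c q)"
    have cnz: "c p \<noteq> 0" for p using cpos[of p] by simp
    have "pcm A" using cpos by (simp add: pcm_def A_def)
    moreover have "consistent A" by (simp add: consistent_def A_def cnz)
    ultimately have "flat_method A $ i / flat_method A $ j = A$i$j"
      using c unfolding correctness_def by blast
    then show False using j by (simp add: flat_method_def A_def c_def)
  qed
qed

theorem proposition4p1:
  assumes "CARD('n::finite) \<ge> 4"
  shows "weighting_method (eigenvector_method :: real^'n^'n \<Rightarrow> real^'n)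
           \<and> correctness (eigenvector_method :: real^'n^'n \<Rightarrow> real^'n)
           \<and> \<not> invariant_alpha_triad (eigenvector_method :: real^'n^'n \<Rightarrow> real^'n)
         \<and> weighting_method (flat_method :: real^'n^'n \<Rightarrow> real^'n)
           \<and> invariant_alpha_triad (flat_method :: real^'n^'n \<Rightarrow> real^'n)
           \<and> \<not> correctness (flat_method :: real^'n^'n \<Rightarrow> real^'n)"
  using evm_weighting evm_correct evm_not_inv[OF assms] flat_props[OF assms] by blast

end
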